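(* Let $\lambda\in X^+$ be a $p$-core. Let $S_1$ be the set of pairs $(\alpha,l)$ with $\alpha=\varepsilon_i+\varepsilon_j$, $1\le i<j\le m$, $l\ge1$ an integer, $a:=\langle\lambda+\rho,\alpha^\vee\rangle-lp>0$, $(\lambda+\rho)_j-a<0$ and $\chi(s_{\alpha,l}\cdot\lambda)\ne0$. Let $S_2$ be the set of pairs $(2\varepsilon_i,l)$ with $1\le i\le m$, $l\ge1$ an integer, $\langle\lambda+\rho,(2\varepsilon_i)^\vee\rangle-lp>0$ and $\chi(s_{2\varepsilon_i,l}\cdot\lambda)\ne0$. Then there is a map $\varphi$ from $S_1$ to the set $\{2\varepsilon_1,\dots,2\varepsilon_m\}$ such that (i) $(\alpha,l)\mapsto(\varphi(\alpha,l),l)$ is a bijection from $S_1$ onto $S_2$, and (ii) $\chi(s_{\alpha,l}\cdot\lambda)=-\chi(s_{\varphi(\alpha,l),l}\cdot\lambda)$ for all $(\alpha,l)\in S_1$. Moreover, if $\alpha=\varepsilon_i+\varepsilon_j$ with $1\le i<j\le m$ and $l\ge1$ is an integer such that $j>l(\lambda)$, $\langle\lambda+\rho,\alpha^\vee\rangle-lp>0$ and $\chi(s_{\alpha,l}\cdot\lambda)\ne0$, then $(\alpha,l)\in S_1$.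
   Context: Setup: $p>2$ is a prime, $m\ge1$, weight lattice $X=\mathbb Z^m$ of $\mathrm{Sp}_{2m}$ with standard basis $\varepsilon_i$, standard inner product, $\alpha^\vee=2\alpha/\langle\alpha,\alpha\rangle$ (so $(\varepsilon_i+\varepsilon_j)^\vee=\varepsilon_i+\varepsilon_j$, $(2\varepsilon_i)^\vee=\varepsilon_i$). $X^+=\{\lambda\in\mathbb Z^m:\lambda_1\ge\dots\ge\lambda_m\ge0\}$; $l(\lambda)$ is the number of nonzero entries. $\rho=(m,m-1,\dots,1)$. $s_{\alpha,l}(x)=x-(\langle x,\alpha^\vee\rangle-lp)\alpha$, $w\cdot x=w(x+\rho)-\rho$. For $\mu\in X$, $\chi(\mu)$ is the Weyl character of type $C_m$; $\chi(\mu)=0$ iff some entry of $\mu+\rho$ is $0$ or two entries of $\mu+\rho$ are equal up to sign, and otherwise $\chi(\mu)=\det(w)\chi(w\cdot\mu)$ for the unique signed permutation $w$ with $w\cdot\mu$ dominant. A $p$-core is $\lambda\in X^+$ such that for all $i$ and all integers $l\ge1$ with $(\lambda+\rho)_i-lp>0$, the number $(\lambda+\rho)_i-lp$ occurs as an entry of $\lambda+\rho$. *)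

theory Defs
  imports Main "HOL-Combinatorics.Permutations" "HOL-Library.Function_Algebras" "HOL-Computational_Algebra.Primes"
begin

text \<open>Weights of Sp(2m) are integer vectors of length m, represented as lists;
  list position k (0-based) corresponds to the basis vector eps_(k+1).\<close>

type_synonym wt = "int list"

definition vadd :: "wt \<Rightarrow> wt \<Rightarrow> wt" where
  "vadd x y = map2 (+) x y"

definition vsub :: "wt \<Rightarrow> wt \<Rightarrow> wt" where
  "vsub x y = map2 (-) x y"

definition vscale :: "int \<Rightarrow> wt \<Rightarrow> wt" where
  "vscale c x = map (\<lambda>a. c * a) x"

definition inner :: "wt \<Rightarrow> wt \<Rightarrow> int" where
  "inner x y = sum_list (map2 (*) x y)"

definition eps :: "nat \<Rightarrow> nat \<Rightarrow> wt" where
  "eps m i = map (\<lambda>k. if k = i then 1 else 0) [0..<m]"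

definition rho :: "nat \<Rightarrow> wt" where
  "rho m = map (\<lambda>k. int (m - k)) [0..<m]"

text \<open>Pairing with the coroot: <x, alpha^vee> = 2<x,alpha>/<alpha,alpha>
  (exact for the roots of C_m).\<close>
definition pair_coroot :: "wt \<Rightarrow> wt \<Rightarrow> int" where
  "pair_coroot x \<alpha> = (2 * inner x \<alpha>) div inner \<alpha> \<alpha>"

definition s_aff :: "nat \<Rightarrow> wt \<Rightarrow> int \<Rightarrow> wt \<Rightarrow> wt" where
  "s_aff p \<alpha> l x = vsub x (vscale (pair_coroot x \<alpha> - l * int p) \<alpha>)"

definition s_dot :: "nat \<Rightarrow> nat \<Rightarrow> wt \<Rightarrow> int \<Rightarrow> wt \<Rightarrow> wt" where
  "s_dot m p \<alpha> l x = vsub (s_aff p \<alpha> l (vadd x (rho m))) (rho m)"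

definition dominant :: "nat \<Rightarrow> wt \<Rightarrow> bool" where
  "dominant m x \<longleftrightarrow> length x = m \<and> sorted_wrt (\<ge>) x \<and> (\<forall>a\<in>set x. a \<ge> 0)"

definition nz_len :: "wt \<Rightarrow> nat" where
  "nz_len x = length (filter (\<lambda>a. a \<noteq> 0) x)"

text \<open>The Weyl group of type C_m: signed permutations (sigma, s), acting by
  (w x)_k = s k * x_(sigma k); its determinant is sign(sigma) * prod s_k.\<close>
definition weyl :: "nat \<Rightarrow> ((nat \<Rightarrow> nat) \<times> (nat \<Rightarrow> int)) set" where
  "weyl m = {(\<sigma>, s). \<sigma> permutes {..<m} \<and> (\<forall>k<m. s k = 1 \<or> s k = -1) \<and> (\<forall>k\<ge>m. s k = 1)}"

definition wact :: "nat \<Rightarrow> (nat \<Rightarrow> nat) \<times> (nat \<Rightarrow> int) \<Rightarrow> wt \<Rightarrow> wt" where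
  "wact m w x = map (\<lambda>k. snd w k * x ! (fst w k)) [0..<m]"

definition wdet :: "nat \<Rightarrow> (nat \<Rightarrow> nat) \<times> (nat \<Rightarrow> int) \<Rightarrow> int" where
  "wdet m w = sign (fst w) * (\<Prod>k<m. snd w k)"

definition wdot :: "nat \<Rightarrow> (nat \<Rightarrow> nat) \<times> (nat \<Rightarrow> int) \<Rightarrow> wt \<Rightarrow> wt" where
  "wdot m w x = vsub (wact m w (vadd x (rho m))) (rho m)"

definition chi_zero :: "nat \<Rightarrow> wt \<Rightarrow> bool" where
  "chi_zero m \<mu> \<longleftrightarrow> (let v = vadd \<mu> (rho m) in
     (\<exists>i<m. v ! i = 0) \<or> (\<exists>i<m. \<exists>j<m. i \<noteq> j \<and> (v ! i = v ! j \<or> v ! i = - v ! j)))"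

text \<open>The Weyl character chi(mu), recorded by its coordinates in the basis
  {chi(nu) : nu dominant} of the character ring (Weyl characters of dominant
  weights are linearly independent): chi(mu) = det(w) chi(w.mu) for the unique
  w with w.mu dominant, and chi(mu) = 0 in the singular case.\<close>
definition chi :: "nat \<Rightarrow> wt \<Rightarrow> (wt \<Rightarrow> int)" where
  "chi m \<mu> = (\<lambda>\<nu>.
     if chi_zero m \<mu> then 0
     else if dominant m \<nu> \<and> (\<exists>w\<in>weyl m. wdot m w \<mu> = \<nu>)
       then wdet m (THE w. w \<in> weyl m \<and> wdot m w \<mu> = \<nu>)
     else 0)"

definition p_core :: "nat \<Rightarrow> nat \<Rightarrow> wt \<Rightarrow> bool" where
  "p_core m p lam \<longleftrightarrow> dominant m lam \<and>
     (let v = vadd lam (rho m) in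
      \<forall>i<m. \<forall>l::int. l \<ge> 1 \<longrightarrow> v ! i - l * int p > 0 \<longrightarrow> v ! i - l * int p \<in> set v)"

end

theory Submission imports Defs begin


lemma vadd_len[simp]: "length (vadd x y) = min (length x) (length y)"
  by (simp add: vadd_def)
lemma vadd_nth[simp]: "k < length x \<Longrightarrow> k < length y \<Longrightarrow> vadd x y ! k = x!k + y!k"
  by (simp add: vadd_def)
lemma vsub_len[simp]: "length (vsub x y) = min (length x) (length y)"
  by (simp add: vsub_def)
lemma vsub_nth[simp]: "k < length x \<Longrightarrow> k < length y \<Longrightarrow> vsub x y ! k = x!k - y!k"
  by (simp add: vsub_def)
lemma vscale_len[simp]: "length (vscale c x) = length x"
  by (simp add: vscale_def)
lemma vscale_nth[simp]: "k < length x \<Longrightarrow> vscale c x ! k = c * x!k"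
  by (simp add: vscale_def)
lemma eps_len[simp]: "length (eps m i) = m"
  by (simp add: eps_def)
lemma eps_nth[simp]: "k < m \<Longrightarrow> eps m i ! k = (if k = i then 1 else 0)"
  by (simp add: eps_def)
lemma rho_len[simp]: "length (rho m) = m"
  by (simp add: rho_def)
lemma rho_nth[simp]: "k < m \<Longrightarrow> rho m ! k = int (m - k)"
  by (simp add: rho_def)

lemma inner_sum: "length x = m \<Longrightarrow> length y = m \<Longrightarrow> inner x y = (\<Sum>k<m. x!k * y!k)"
  unfolding inner_def by (simp add: sum_list_sum_nth atLeast0LessThan)

lemma inner_eps: "length x = m \<Longrightarrow> i < m \<Longrightarrow> inner x (eps m i) = x ! i"
  by (simp add: inner_sum if_distrib cong: if_cong)

lemma inner_vadd: "length x = m \<Longrightarrow> length a = m \<Longrightarrow> length b = m \<Longrightarrow>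
   inner x (vadd a b) = inner x a + inner x b"
  by (simp add: inner_sum distrib_left sum.distrib)

lemma inner_vscale: "length x = m \<Longrightarrow> length a = m \<Longrightarrow>
   inner x (vscale c a) = c * inner x a"
  by (simp add: inner_sum sum_distrib_left mult_ac)

lemma pc_pos: "length x = m \<Longrightarrow> i < j \<Longrightarrow> j < m \<Longrightarrow>
   pair_coroot x (vadd (eps m i) (eps m j)) = x!i + x!j"
  unfolding pair_coroot_def
  by (simp add: inner_vadd inner_eps)

lemma pc_long: "length x = m \<Longrightarrow> i < m \<Longrightarrow>
   pair_coroot x (vscale 2 (eps m i)) = x!i"
  unfolding pair_coroot_def
  by (simp add: inner_vscale inner_eps)

lemma saff_nth: "length x = m \<Longrightarrow> length a = m \<Longrightarrow>
   s_aff p a l x = map (\<lambda>k. x!k - (pair_coroot x a - l * int p) * a!k) [0..<m]"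
  unfolding s_aff_def by (rule nth_equalityI) auto

lemma sdot_rho: "length lam = m \<Longrightarrow> length a = m \<Longrightarrow>
  vadd (s_dot m p a l lam) (rho m) = s_aff p a l (vadd lam (rho m))"
  unfolding s_dot_def by (rule nth_equalityI) (auto simp: saff_nth)

lemma sdot_len: "length lam = m \<Longrightarrow> length a = m \<Longrightarrow> length (s_dot m p a l lam) = m"
  unfolding s_dot_def by (simp add: saff_nth)


definition fl :: "nat \<Rightarrow> (nat \<Rightarrow> nat) \<times> (nat \<Rightarrow> int) \<Rightarrow> (nat \<Rightarrow> nat) \<times> (nat \<Rightarrow> int)" where
  "fl j w = (fst w, \<lambda>k. snd w k * (if fst w k = j then -1 else 1))"

lemma fl_weyl: "w \<in> weyl m \<Longrightarrow> j < m \<Longrightarrow> fl j w \<in> weyl m"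
  unfolding weyl_def fl_def
  by (auto simp: permutes_not_in split: prod.splits)

lemma fl_wact: "w \<in> weyl m \<Longrightarrow> length u = m \<Longrightarrow> j < m \<Longrightarrow>
   (\<forall>k<m. u'!k = (if k = j then - u!k else u!k)) \<Longrightarrow> wact m (fl j w) u' = wact m w u"
proof -
  assume w: "w \<in> weyl m" and l: "length u = m" and j: "j < m" and F: "\<forall>k<m. u'!k = (if k = j then - u!k else u!k)"
  obtain \<sigma> s where ws: "w = (\<sigma>, s)" by (cases w)
  have p: "\<sigma> permutes {..<m}" using w ws by (simp add: weyl_def)
  have lt: "k < m \<Longrightarrow> \<sigma> k < m" for k using permutes_in_image[OF p, of k] by simp
  show ?thesis unfolding wact_def fl_def ws
    by (intro map_cong) (auto simp: F lt)
qed

lemma fl_wdet: "w \<in> weyl m \<Longrightarrow> j < m \<Longrightarrow> wdet m (fl j w) = - wdet m w"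
proof -
  assume w: "w \<in> weyl m" and j: "j < m"
  obtain \<sigma> s where ws: "w = (\<sigma>, s)" by (cases w)
  have perm: "\<sigma> permutes {..<m}" using w ws by (simp add: weyl_def)
  have "(\<Prod>k<m. (if \<sigma> k = j then -1 else 1) :: int) = (\<Prod>k<m. (if k = j then -1 else 1))"
    using prod.permute[OF perm, of "\<lambda>k. (if k = j then -1 else 1) :: int"]
    by (simp add: comp_def)
  also have "\<dots> = -1" using j by (simp add: prod.delta)
  finally have P: "(\<Prod>k<m. (if \<sigma> k = j then -1 else 1) :: int) = -1" .
  show ?thesis unfolding wdet_def fl_def ws
    by (simp add: prod.distrib P)
qed

definition bad :: "nat \<Rightarrow> int list \<Rightarrow> bool" where
  "bad m v \<longleftrightarrow> (\<exists>i<m. v ! i = 0) \<or> (\<exists>i<m. \<exists>j<m. i \<noteq> j \<and> (v ! i = v ! j \<or> v ! i = - v ! j))"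

lemma chi_zero_bad: "chi_zero m \<mu> = bad m (vadd \<mu> (rho m))"
  by (simp add: chi_zero_def bad_def Let_def)

lemma bad_abs: "bad m v \<longleftrightarrow> (\<exists>i<m. \<bar>v ! i\<bar> = 0) \<or> (\<exists>i<m. \<exists>j<m. i \<noteq> j \<and> \<bar>v ! i\<bar> = \<bar>v ! j\<bar>)"
  unfolding bad_def by (auto simp: abs_eq_iff)

lemma bad_flip: "(\<forall>k<m. u'!k = (if k = j then - u!k else u!k)) \<Longrightarrow> bad m u' = bad m u"
proof -
  assume h: "\<forall>k<m. u'!k = (if k = j then - u!k else u!k)"
  hence A: "\<And>k. k<m \<Longrightarrow> \<bar>u'!k\<bar> = \<bar>u!k\<bar>" by auto
  have 1: "(\<exists>i<m. \<bar>u'!i\<bar> = 0) = (\<exists>i<m. \<bar>u!i\<bar> = 0)"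
    using A by metis
  have 2: "(\<exists>i<m. \<exists>j<m. i \<noteq> j \<and> \<bar>u'!i\<bar> = \<bar>u'!j\<bar>) = (\<exists>i<m. \<exists>j<m. i \<noteq> j \<and> \<bar>u!i\<bar> = \<bar>u!j\<bar>)"
    using A by metis
  show ?thesis unfolding bad_abs 1 2 ..
qed

lemma uniq: "w \<in> weyl m \<Longrightarrow> w' \<in> weyl m \<Longrightarrow> length u = m \<Longrightarrow> \<not> bad m u \<Longrightarrow>
   wact m w u = wact m w' u \<Longrightarrow> w = w'"
proof -
  assume w: "w \<in> weyl m" and w': "w' \<in> weyl m" and len: "length u = m" and nb: "\<not> bad m u"
    and eq: "wact m w u = wact m w' u"
  obtain \<sigma> s where ws: "w = (\<sigma>, s)" by (cases w)
  obtain \<sigma>' s' where ws': "w' = (\<sigma>', s')" by (cases w')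
  have p: "\<sigma> permutes {..<m}" and sv: "\<forall>k<m. s k = 1 \<or> s k = -1" and so: "\<forall>k\<ge>m. s k = 1"
    using w ws by (auto simp: weyl_def)
  have p': "\<sigma>' permutes {..<m}" and sv': "\<forall>k<m. s' k = 1 \<or> s' k = -1" and so': "\<forall>k\<ge>m. s' k = 1"
    using w' ws' by (auto simp: weyl_def)
  have E: "s k * u ! (\<sigma> k) = s' k * u ! (\<sigma>' k)" if k: "k < m" for k
  proof -
    have "wact m w u ! k = wact m w' u ! k" using eq by simp
    thus ?thesis using k ws ws' by (simp add: wact_def)
  qed
  have S: "\<sigma> k = \<sigma>' k \<and> s k = s' k" for k
  proof (cases "k < m")
    case True
    have i1: "\<sigma> k < m" using permutes_in_image[OF p, of k] True by simp
    have i2: "\<sigma>' k < m" using permutes_in_image[OF p', of k] True by simp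
    have "\<bar>u ! (\<sigma> k)\<bar> = \<bar>u ! (\<sigma>' k)\<bar>"
      using E[OF True] sv[rule_format, OF True] sv'[rule_format, OF True]
      by (auto simp: abs_mult)
    hence s1: "\<sigma> k = \<sigma>' k" using nb i1 i2 unfolding bad_abs by blast
    have "u ! (\<sigma> k) \<noteq> 0" using nb i1 unfolding bad_def by blast
    with E[OF True] s1 have "s k = s' k" by simp
    with s1 show ?thesis by simp
  next
    case False
    thus ?thesis using p p' so so' by (simp add: permutes_not_in)
  qed
  show ?thesis unfolding ws ws' using S by (simp add: fun_eq_iff)
qed

lemma chi_flip:
  assumes len: "length \<mu> = m" "length \<mu>' = m" and j: "j < m"
    and fl: "\<forall>k<m. vadd \<mu>' (rho m) ! k = (if k = j then - (vadd \<mu> (rho m) ! k) else vadd \<mu> (rho m) ! k)"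
  shows "chi m \<mu>' = - chi m \<mu>"
proof -
  define u where "u = vadd \<mu> (rho m)"
  define u' where "u' = vadd \<mu>' (rho m)"
  have lu: "length u = m" "length u' = m" using len by (auto simp: u_def u'_def)
  have F: "\<forall>k<m. u'!k = (if k = j then - u!k else u!k)" using fl by (simp add: u_def u'_def)
  have F': "\<forall>k<m. u!k = (if k = j then - u'!k else u'!k)" using F by auto
  have bz: "chi_zero m \<mu>' = chi_zero m \<mu>"
    by (simp add: chi_zero_bad u_def[symmetric] u'_def[symmetric] bad_flip[OF F])
  have wd: "\<And>w. wdot m w \<mu> = vsub (wact m w u) (rho m)" "\<And>w. wdot m w \<mu>' = vsub (wact m w u') (rho m)"
    by (simp_all add: wdot_def u_def u'_def)
  have vinj: "vsub a (rho m) = vsub b (rho m) \<Longrightarrow> length a = m \<Longrightarrow> length b = m \<Longrightarrow> a = b" for a b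
  proof -
    assume eq: "vsub a (rho m) = vsub b (rho m)" and la: "length a = m" and lb: "length b = m"
    show "a = b"
    proof (rule nth_equalityI)
      show "length a = length b" using la lb by simp
      fix k assume k: "k < length a"
      have "vsub a (rho m) ! k = vsub b (rho m) ! k" using eq by simp
      thus "a ! k = b ! k" using k la lb by simp
    qed
  qed
  have wl: "length (wact m w x) = m" for w x by (simp add: wact_def)
  show ?thesis
  proof (cases "chi_zero m \<mu>")
    case True
    thus ?thesis using bz by (simp add: chi_def fun_eq_iff)
  next
    case False
    hence nb: "\<not> bad m u" "\<not> bad m u'" using bz by (simp_all add: chi_zero_bad u_def u'_def)
    have U: "w = w'" if h: "w \<in> weyl m" "w' \<in> weyl m" "wdot m w \<mu> = wdot m w' \<mu>" for w w'
    proof -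
      have "vsub (wact m w u) (rho m) = vsub (wact m w' u) (rho m)" using h(3) by (simp add: wd)
      hence "wact m w u = wact m w' u" by (rule vinj) (simp_all add: wl)
      thus ?thesis by (rule uniq[OF h(1,2) lu(1) nb(1)])
    qed
    have U': "w = w'" if h: "w \<in> weyl m" "w' \<in> weyl m" "wdot m w \<mu>' = wdot m w' \<mu>'" for w w'
    proof -
      have "vsub (wact m w u') (rho m) = vsub (wact m w' u') (rho m)" using h(3) by (simp add: wd)
      hence "wact m w u' = wact m w' u'" by (rule vinj) (simp_all add: wl)
      thus ?thesis by (rule uniq[OF h(1,2) lu(2) nb(2)])
    qed
    have T: "w \<in> weyl m \<Longrightarrow> wdot m (fl j w) \<mu>' = wdot m w \<mu>" for w
      using fl_wact[OF _ lu(1) j F] wd by simp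
    have T': "w \<in> weyl m \<Longrightarrow> wdot m (fl j w) \<mu> = wdot m w \<mu>'" for w
      using fl_wact[OF _ lu(2) j F'] wd by simp
    have "chi m \<mu>' \<nu> = - chi m \<mu> \<nu>" for \<nu>
    proof (cases "dominant m \<nu> \<and> (\<exists>w\<in>weyl m. wdot m w \<mu> = \<nu>)")
      case True
      then obtain w where w: "w \<in> weyl m" "wdot m w \<mu> = \<nu>" and d: "dominant m \<nu>" by blast
      have th1: "(THE w. w \<in> weyl m \<and> wdot m w \<mu> = \<nu>) = w"
        by (rule the_equality) (use w U in auto)
      have P2: "fl j w \<in> weyl m \<and> wdot m (fl j w) \<mu>' = \<nu>"
        using w T[OF w(1)] fl_weyl[OF w(1) j] by simp
      have th2: "(THE w. w \<in> weyl m \<and> wdot m w \<mu>' = \<nu>) = fl j w"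
        by (rule the_equality) (use P2 U' in auto)
      have ex2: "\<exists>w\<in>weyl m. wdot m w \<mu>' = \<nu>" using P2 by blast
      show ?thesis using False bz d w(1) ex2 th1 th2 True fl_wdet[OF w(1) j]
        by (simp add: chi_def)
    next
      case nc: False
      have "\<not> (dominant m \<nu> \<and> (\<exists>w\<in>weyl m. wdot m w \<mu>' = \<nu>))"
      proof
        assume "dominant m \<nu> \<and> (\<exists>w\<in>weyl m. wdot m w \<mu>' = \<nu>)"
        then obtain w where d: "dominant m \<nu>" and w: "w \<in> weyl m" "wdot m w \<mu>' = \<nu>" by blast
        have "fl j w \<in> weyl m" "wdot m (fl j w) \<mu> = \<nu>" using fl_weyl[OF w(1) j] T'[OF w(1)] w by simp_all
        thus False using nc d by blast
      qed
      thus ?thesis using nc by (auto simp: chi_def)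
    qed
    thus ?thesis by (simp add: fun_eq_iff)
  qed
qed


lemma chi_nz: "chi m \<mu> \<noteq> 0 \<Longrightarrow> \<not> bad m (vadd \<mu> (rho m))"
  by (auto simp: chi_def chi_zero_bad fun_eq_iff)

lemma u1_nth: "length lam = m \<Longrightarrow> i < j \<Longrightarrow> j < m \<Longrightarrow> k < m \<Longrightarrow>
  vadd (s_dot m p (vadd (eps m i) (eps m j)) l lam) (rho m) ! k =
   vadd lam (rho m) ! k - (vadd lam (rho m) ! i + vadd lam (rho m) ! j - l * int p) *
     ((if k = i then 1 else 0) + (if k = j then 1 else 0))"
  by (simp add: sdot_rho saff_nth pc_pos)

lemma u2_nth: "length lam = m \<Longrightarrow> i < m \<Longrightarrow> k < m \<Longrightarrow>
  vadd (s_dot m p (vscale 2 (eps m i)) l lam) (rho m) ! k =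
   vadd lam (rho m) ! k - (vadd lam (rho m) ! i - l * int p) * (2 * (if k = i then 1 else 0))"
  by (simp add: sdot_rho saff_nth pc_long)

lemma nz_zero:
  assumes d: "dominant m lam" and j: "nz_len lam \<le> j" and k: "j \<le> k" "k < m"
  shows "lam ! k = 0"
proof (rule ccontr)
  assume nz: "lam ! k \<noteq> 0"
  have lm: "length lam = m" and s: "sorted_wrt (\<ge>) lam" and pos: "\<forall>a\<in>set lam. a \<ge> 0"
    using d by (auto simp: dominant_def)
  have "lam ! k \<ge> 0" using pos k lm by auto
  hence gt: "lam ! k > 0" using nz by simp
  have "{0..k} \<subseteq> {i. i < length lam \<and> lam ! i \<noteq> 0}"
  proof
    fix i assume "i \<in> {0..k}"
    hence ik: "i \<le> k" by simp
    have "lam ! i \<ge> lam ! k"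
    proof (cases "i = k")
      case False
      thus ?thesis using s ik k lm by (simp add: sorted_wrt_iff_nth_less)
    qed simp
    thus "i \<in> {i. i < length lam \<and> lam ! i \<noteq> 0}" using gt ik k lm by auto
  qed
  hence "card {0..k} \<le> card {i. i < length lam \<and> lam ! i \<noteq> 0}"
    by (rule card_mono[rotated]) simp
  hence "k + 1 \<le> nz_len lam" by (simp add: nz_len_def length_filter_conv_card)
  thus False using j k by simp
qed


theorem lemma2p2:
  fixes p m :: nat and lam :: "int list" and S1 S2 :: "(int list \<times> int) set"
  assumes "prime p" and "p > 2" and "m \<ge> 1"
    and core: "p_core m p lam"
    and S1_def: "S1 = {(\<alpha>, l). \<exists>i j. i < j \<and> j < m \<and> \<alpha> = vadd (eps m i) (eps m j) \<and> l \<ge> 1 \<and>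
        pair_coroot (vadd lam (rho m)) \<alpha> - l * int p > 0 \<and>
        (vadd lam (rho m)) ! j - (pair_coroot (vadd lam (rho m)) \<alpha> - l * int p) < 0 \<and>
        chi m (s_dot m p \<alpha> l lam) \<noteq> 0}"
    and S2_def: "S2 = {(\<alpha>, l). \<exists>i. i < m \<and> \<alpha> = vscale 2 (eps m i) \<and> l \<ge> 1 \<and>
        pair_coroot (vadd lam (rho m)) \<alpha> - l * int p > 0 \<and>
        chi m (s_dot m p \<alpha> l lam) \<noteq> 0}"
  shows "(\<exists>\<phi> :: int list \<times> int \<Rightarrow> int list.
            (\<forall>x\<in>S1. \<phi> x \<in> {vscale 2 (eps m i) | i. i < m}) \<and>
            bij_betw (\<lambda>(\<alpha>, l). (\<phi> (\<alpha>, l), l)) S1 S2 \<and>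
            (\<forall>(\<alpha>, l)\<in>S1. chi m (s_dot m p \<alpha> l lam) = - chi m (s_dot m p (\<phi> (\<alpha>, l)) l lam)))
       \<and> (\<forall>i j (l::int). i < j \<and> j < m \<and> j + 1 > nz_len lam \<and> l \<ge> 1 \<and>
            pair_coroot (vadd lam (rho m)) (vadd (eps m i) (eps m j)) - l * int p > 0 \<and>
            chi m (s_dot m p (vadd (eps m i) (eps m j)) l lam) \<noteq> 0
            \<longrightarrow> (vadd (eps m i) (eps m j), l) \<in> S1)"
proof -
  define v where "v = vadd lam (rho m)"
  have dom: "dominant m lam" using core by (simp add: p_core_def)
  have lm: "length lam = m" and srt: "sorted_wrt (\<ge>) lam" and pos: "\<forall>a\<in>set lam. a \<ge> 0"
    using dom by (auto simp: dominant_def)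
  have lv: "length v = m" using lm by (simp add: v_def)
  have vnth: "k < m \<Longrightarrow> v ! k = lam ! k + int (m - k)" for k using lm by (simp add: v_def)
  have vstrict: "v ! j < v ! i" if "i < j" "j < m" for i j
  proof -
    have "lam ! i \<ge> lam ! j" using srt that lm by (simp add: sorted_wrt_iff_nth_less)
    thus ?thesis using that by (simp add: vnth)
  qed
  have vinj: "v ! a = v ! b \<Longrightarrow> a < m \<Longrightarrow> b < m \<Longrightarrow> a = b" for a b
    using vstrict by (metis linorder_neqE_nat less_irrefl)
  have vcore: "\<exists>k<m. v ! k = v ! i - l * int p" if "i < m" "l \<ge> 1" "v ! i - l * int p > 0" for i l
  proof -
    have "v ! i - l * int p \<in> set v" using core that unfolding p_core_def Let_def v_def[symmetric] lv
      by (simp add: lv)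
    thus ?thesis by (auto simp: in_set_conv_nth lv)
  qed
  define u1 where "u1 i j l = vadd (s_dot m p (vadd (eps m i) (eps m j)) l lam) (rho m)" for i j l
  define u2 where "u2 i l = vadd (s_dot m p (vscale 2 (eps m i)) l lam) (rho m)" for i l
  have u1n: "i < j \<Longrightarrow> j < m \<Longrightarrow> k < m \<Longrightarrow> u1 i j l ! k =
      v ! k - (v ! i + v ! j - l * int p) * ((if k = i then 1 else 0) + (if k = j then 1 else 0))" for i j l k
    unfolding u1_def v_def by (rule u1_nth[OF lm])
  have u2n: "i < m \<Longrightarrow> k < m \<Longrightarrow> u2 i l ! k =
      v ! k - (v ! i - l * int p) * (2 * (if k = i then 1 else 0))" for i l k
    unfolding u2_def v_def by (rule u2_nth[OF lm])
  have pc1: "i < j \<Longrightarrow> j < m \<Longrightarrow> pair_coroot v (vadd (eps m i) (eps m j)) = v ! i + v ! j" for i j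
    by (rule pc_pos[OF lv])
  have pc2: "i < m \<Longrightarrow> pair_coroot v (vscale 2 (eps m i)) = v ! i" for i
    by (rule pc_long[OF lv])
  have LA: "v ! i - l * int p = v ! j"
    if ij: "i < j" "j < m" and l: "l \<ge> 1" and gt: "v ! i - l * int p > 0"
      and nz: "chi m (s_dot m p (vadd (eps m i) (eps m j)) l lam) \<noteq> 0" for i j l
  proof -
    obtain k where k: "k < m" "v ! k = v ! i - l * int p" using vcore[of i l] ij l gt by auto
    have nb: "\<not> bad m (u1 i j l)" using chi_nz[OF nz] by (simp add: u1_def)
    have lp: "l * int p > 0" using l assms(2) by simp
    have ki: "k \<noteq> i" using k lp by auto
    show ?thesis
    proof (rule ccontr)
      assume "v ! i - l * int p \<noteq> v ! j"
      hence kj: "k \<noteq> j" using k by auto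
      have "u1 i j l ! k = - (u1 i j l ! j)" using u1n[OF ij, of k l] u1n[OF ij, of j l] k ki kj ij
        by simp
      thus False using nb kj k ij unfolding bad_def by blast
    qed
  qed
  have FL: "chi m (s_dot m p (vadd (eps m i) (eps m j)) l lam) = - chi m (s_dot m p (vscale 2 (eps m i)) l lam)"
    if ij: "i < j" "j < m" and e: "v ! i - l * int p = v ! j" for i j l
  proof (rule chi_flip)
    show "length (s_dot m p (vadd (eps m i) (eps m j)) l lam) = m" by (simp add: sdot_len lm)
    show "length (s_dot m p (vscale 2 (eps m i)) l lam) = m" by (simp add: sdot_len lm)
    show "j < m" by fact
    show "\<forall>k<m. vadd (s_dot m p (vadd (eps m i) (eps m j)) l lam) (rho m) ! k =
      (if k = j then - vadd (s_dot m p (vscale 2 (eps m i)) l lam) (rho m) ! k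
       else vadd (s_dot m p (vscale 2 (eps m i)) l lam) (rho m) ! k)"
      unfolding u1_def[symmetric] u2_def[symmetric]
    proof (intro allI impI)
      fix k assume k: "k < m"
      have im: "i < m" using ij by simp
      have "v ! i + v ! j - l * int p = 2 * v ! j" using e by simp
      thus "u1 i j l ! k = (if k = j then - u2 i l ! k else u2 i l ! k)"
        using u1n[OF ij k, of l] u2n[OF im k, of l] e ij by auto
    qed
  qed
  define \<phi> where "\<phi> = (\<lambda>(\<alpha>::int list, l::int). vscale 2 (eps m (LEAST k. \<alpha> ! k \<noteq> 0)))"
  have least: "(LEAST k. vadd (eps m i) (eps m j) ! k \<noteq> 0) = i" if "i < j" "j < m" for i j
  proof (rule Least_equality)
    show "vadd (eps m i) (eps m j) ! i \<noteq> 0" using that by simp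
    fix y assume y: "vadd (eps m i) (eps m j) ! y \<noteq> 0"
    show "i \<le> y"
    proof (rule ccontr)
      assume "\<not> i \<le> y"
      hence "y < i" by simp
      hence "vadd (eps m i) (eps m j) ! y = 0" using that by simp
      thus False using y by simp
    qed
  qed
  have phi1: "\<phi> (vadd (eps m i) (eps m j), l) = vscale 2 (eps m i)" if "i < j" "j < m" for i j l
    using least[OF that] by (simp add: \<phi>_def)
  have S1m: "(\<alpha>, l) \<in> S1 \<longleftrightarrow> (\<exists>i j. i < j \<and> j < m \<and> \<alpha> = vadd (eps m i) (eps m j) \<and> l \<ge> 1 \<and>
        v ! i - l * int p = v ! j \<and> chi m (s_dot m p \<alpha> l lam) \<noteq> 0)" for \<alpha> l
  proof
    assume "(\<alpha>, l) \<in> S1"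
    then obtain i j where h: "i < j" "j < m" "\<alpha> = vadd (eps m i) (eps m j)" "l \<ge> 1"
      "v ! i + v ! j - l * int p > 0" "v ! j - (v ! i + v ! j - l * int p) < 0"
      "chi m (s_dot m p \<alpha> l lam) \<noteq> 0"
      unfolding S1_def v_def[symmetric] using pc1 by auto
    have "v ! i - l * int p = v ! j" using LA[of i j l] h by auto
    thus "\<exists>i j. i < j \<and> j < m \<and> \<alpha> = vadd (eps m i) (eps m j) \<and> l \<ge> 1 \<and>
        v ! i - l * int p = v ! j \<and> chi m (s_dot m p \<alpha> l lam) \<noteq> 0" using h by blast
  next
    assume "\<exists>i j. i < j \<and> j < m \<and> \<alpha> = vadd (eps m i) (eps m j) \<and> l \<ge> 1 \<and>
        v ! i - l * int p = v ! j \<and> chi m (s_dot m p \<alpha> l lam) \<noteq> 0"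
    then obtain i j where h: "i < j" "j < m" "\<alpha> = vadd (eps m i) (eps m j)" "l \<ge> 1"
        "v ! i - l * int p = v ! j" "chi m (s_dot m p \<alpha> l lam) \<noteq> 0" by blast
    have vj: "v ! j \<ge> 1" using vnth[of j] h pos lm by (auto simp: all_set_conv_all_nth)
    show "(\<alpha>, l) \<in> S1" unfolding S1_def v_def[symmetric] mem_Collect_eq case_prod_conv
      by (rule exI[of _ i], rule exI[of _ j]) (use h pc1[of i j] vj in auto)
  qed
  have S2m: "(\<beta>, l) \<in> S2 \<longleftrightarrow> (\<exists>i. i < m \<and> \<beta> = vscale 2 (eps m i) \<and> l \<ge> 1 \<and>
        v ! i - l * int p > 0 \<and> chi m (s_dot m p \<beta> l lam) \<noteq> 0)" for \<beta> l
    unfolding S2_def v_def[symmetric] using pc2 by auto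
  have vsinj: "vscale 2 (eps m i) = vscale 2 (eps m i') \<Longrightarrow> i < m \<Longrightarrow> i' < m \<Longrightarrow> i = i'" for i i'
  proof (rule ccontr)
    assume h: "vscale 2 (eps m i) = vscale 2 (eps m i')" "i < m" "i' < m" "i \<noteq> i'"
    have "vscale 2 (eps m i) ! i = vscale 2 (eps m i') ! i" using h(1) by (rule arg_cong)
    thus False using h(2-4) by simp
  qed
  let ?g = "\<lambda>(\<alpha>, l). (\<phi> (\<alpha>, l), l)"
  have P1: "\<forall>x\<in>S1. \<phi> x \<in> {vscale 2 (eps m i) | i. i < m}"
  proof
    fix x assume "x \<in> S1"
    then obtain \<alpha> l where x: "x = (\<alpha>, l)" "(\<alpha>, l) \<in> S1" by (cases x) auto
    then obtain i j where h: "i < j" "j < m" "\<alpha> = vadd (eps m i) (eps m j)" using S1m by blast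
    show "\<phi> x \<in> {vscale 2 (eps m i) | i. i < m}" using h x phi1 by auto
  qed
  have P3: "\<forall>(\<alpha>, l)\<in>S1. chi m (s_dot m p \<alpha> l lam) = - chi m (s_dot m p (\<phi> (\<alpha>, l)) l lam)"
  proof (intro ballI, clarify)
    fix \<alpha> l assume "(\<alpha>, l) \<in> S1"
    then obtain i j where h: "i < j" "j < m" "\<alpha> = vadd (eps m i) (eps m j)" "v ! i - l * int p = v ! j"
      using S1m by blast
    show "chi m (s_dot m p \<alpha> l lam) = - chi m (s_dot m p (\<phi> (\<alpha>, l)) l lam)"
      using FL[OF h(1,2,4)] h phi1 by simp
  qed
  have inj: "inj_on ?g S1"
  proof (rule inj_onI)
    fix x y assume xa: "x \<in> S1" and yb: "y \<in> S1" and gxy: "?g x = ?g y"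
    obtain \<alpha> l where x: "x = (\<alpha>, l)" by (cases x)
    obtain \<alpha>' l' where y: "y = (\<alpha>', l')" by (cases y)
    have a: "(\<alpha>, l) \<in> S1" and b: "(\<alpha>', l') \<in> S1" using xa yb x y by auto
    have e: "\<phi> (\<alpha>, l) = \<phi> (\<alpha>', l')" "l = l'" using gxy x y by auto
    obtain i j where h: "i < j" "j < m" "\<alpha> = vadd (eps m i) (eps m j)" "v ! i - l * int p = v ! j"
      using a S1m by blast
    obtain i' j' where h': "i' < j'" "j' < m" "\<alpha>' = vadd (eps m i') (eps m j')" "v ! i' - l' * int p = v ! j'"
      using b S1m by blast
    have "i = i'" using e phi1 h h' vsinj by (metis order.strict_trans)
    hence "j = j'" using h h' e vinj by metis
    thus "x = y" using h h' \<open>i = i'\<close> x y e by simp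
  qed
  have img: "?g ` S1 = S2"
  proof
    show "?g ` S1 \<subseteq> S2"
    proof clarify
      fix \<alpha> l assume "(\<alpha>, l) \<in> S1"
      then obtain i j where h: "i < j" "j < m" "\<alpha> = vadd (eps m i) (eps m j)" "l \<ge> 1"
          "v ! i - l * int p = v ! j" "chi m (s_dot m p \<alpha> l lam) \<noteq> 0"
        using S1m by blast
      have "v ! j \<ge> 1" using vnth[of j] h pos lm by (auto simp: all_set_conv_all_nth)
      moreover have "chi m (s_dot m p (vscale 2 (eps m i)) l lam) \<noteq> 0" using FL[OF h(1,2,5)] h(3,6) by auto
      ultimately have "(vscale 2 (eps m i), l) \<in> S2" unfolding S2m using h by (intro exI[of _ i]) auto
      thus "(\<phi> (\<alpha>, l), l) \<in> S2" using h phi1 by simp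
    qed
    show "S2 \<subseteq> ?g ` S1"
    proof clarify
      fix \<beta> l assume "(\<beta>, l) \<in> S2"
      then obtain i where h: "i < m" "\<beta> = vscale 2 (eps m i)" "l \<ge> 1" "v ! i - l * int p > 0"
        "chi m (s_dot m p \<beta> l lam) \<noteq> 0" using S2m by blast
      obtain k where k: "k < m" "v ! k = v ! i - l * int p" using vcore h by blast
      have ik: "i < k"
      proof (rule ccontr)
        assume "\<not> i < k"
        hence "k < i \<or> k = i" by auto
        moreover have "l * int p > 0" using h(3) assms(2) by simp
        ultimately show False using vstrict[of k i] h k by auto
      qed
      have "chi m (s_dot m p (vadd (eps m i) (eps m k)) l lam) \<noteq> 0" using FL[OF ik k(1)] k h by auto
      hence mem: "(vadd (eps m i) (eps m k), l) \<in> S1" unfolding S1m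
        by (intro exI[of _ i] exI[of _ k]) (use ik k h in auto)
      have e: "(\<beta>, l) = ?g (vadd (eps m i) (eps m k), l)" using phi1[OF ik k(1)] h by simp
      show "(\<beta>, l) \<in> ?g ` S1" using image_eqI[of "(\<beta>, l)" ?g "(vadd (eps m i) (eps m k), l)" S1, OF e mem] .
    qed
  qed
  have part1: "\<exists>\<phi> :: int list \<times> int \<Rightarrow> int list.
            (\<forall>x\<in>S1. \<phi> x \<in> {vscale 2 (eps m i) | i. i < m}) \<and>
            bij_betw (\<lambda>(\<alpha>, l). (\<phi> (\<alpha>, l), l)) S1 S2 \<and>
            (\<forall>(\<alpha>, l)\<in>S1. chi m (s_dot m p \<alpha> l lam) = - chi m (s_dot m p (\<phi> (\<alpha>, l)) l lam))"
    using P1 P3 inj img by (auto simp: bij_betw_def)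
  have part2: "(vadd (eps m i) (eps m j), l) \<in> S1"
    if h: "i < j" "j < m" "j + 1 > nz_len lam" "l \<ge> 1"
      "pair_coroot (vadd lam (rho m)) (vadd (eps m i) (eps m j)) - l * int p > 0"
      "chi m (s_dot m p (vadd (eps m i) (eps m j)) l lam) \<noteq> 0" for i j l
  proof -
    have a: "v ! i + v ! j - l * int p > 0" using h(5) pc1[OF h(1,2)] by (simp add: v_def)
    have vz: "v ! k = int (m - k)" if "j \<le> k" "k < m" for k
      using nz_zero[OF dom _ that] h(3) vnth[OF that(2)] by simp
    have nb: "\<not> bad m (u1 i j l)" using chi_nz[OF h(6)] by (simp add: u1_def)
    have gt: "v ! i - l * int p > 0"
    proof (rule ccontr)
      assume "\<not> v ! i - l * int p > 0"
      hence t: "l * int p - v ! i \<ge> 0" by simp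
      have uj: "u1 i j l ! j = l * int p - v ! i" using u1n[OF h(1,2) h(2), of l] h by simp
      show False
      proof (cases "l * int p - v ! i = 0")
        case True
        thus False using nb uj h unfolding bad_def by auto
      next
        case False
        define t where "t = l * int p - v ! i"
        have t1: "t \<ge> 1" using False t by (simp add: t_def)
        have t2: "t < v ! j" using a by (simp add: t_def)
        have vj: "v ! j = int (m - j)" using vz h by simp
        define k where "k = m - nat t"
        have kj: "j < k" and km: "k < m" using t1 t2 vj h by (auto simp: k_def)
        have vk: "v ! k = t" using vz[of k] kj km t1 by (simp add: k_def)
        have "u1 i j l ! k = t" using u1n[OF h(1,2) km, of l] vk kj h by simp
        hence "u1 i j l ! k = u1 i j l ! j" using uj t_def by simp
        moreover have "k \<noteq> j" using kj by simp
        ultimately show False using nb km h(2) unfolding bad_def by blast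
      qed
    qed
    have "v ! i - l * int p = v ! j" using LA[OF h(1,2,4) gt h(6)] .
    thus ?thesis using S1m h by blast
  qed
  show ?thesis using part1 part2 by blast
qed

end
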